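(* Let $(V,d)$ be a $\gamma$-coherent geometry with $|V|=n$, with (H2) holding for constants $\phi>0$ and $0<\lambda<1$, let $E_0$ be a substrate for $(V,d)$, let $\theta>0$, and let $E_q$ be a random edge set sampled from a product measure $G(n,\mathbf{Q})$ that is $\theta$-uniformly rich for $(V,d)$. Then with high probability the graph $G(V,E_0\cup E_q)$ is $(\theta+1)$-reducible.
   Context: Geometry $(V,d)$: finite $V$, $d$ symmetric, nonnegative, $d(x,y)=0$ iff $x=y$. For $\gamma>1$, $K=\lceil\log_\gamma n\rceil$, $P_k(v)=\#\{u: d(v,u)\in(\gamma^{k-1},\gamma^k]\}$; for $v\ne t$, $k_{vt}$ is the integer with $d(v,t)\in(\gamma^{k_{vt}-1},\gamma^{k_{vt}}]$ and $D_\lambda(v,t)=\{u: d(v,u)\le\gamma^{k_{vt}},\ d(u,t)\le\lambda d(v,t)\}$. $(V,d)$ is $\gamma$-coherent if (H1) there are $A>1,\alpha>0$ with $\alpha\gamma^k\le P_k(v)\le A\gamma^k$ for all $v$, $k\in[K]$, and (H2) there are $\phi>0$, $0<\lambda<1$ with $|D_\lambda(v,t)|\ge\phi\gamma^{k_{vt}}$ for all $v\ne t$. Substrate: an edge set $E_0$ such that for every $s\ne t$ there is $v$ with $\{s,v\}\in E_0$ and $d(v,t)\le d(s,t)-1$; one such $v$ is fixed and called the local $t$-connection of $s$. The local $(s,t)$-path starts at $s$ and repeatedly moves to the local $t$-connection of the current vertex until reaching $t$. $G(n,\mathbf{Q})$ includes each pair $\{i,j\}$ independently with probability $Q_{ij}$.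 With $k_\theta=\frac{\theta\log\log n-\log\alpha}{\log\gamma}$, it is $\theta$-uniformly rich if there is a constant $M>0$ such that for every $k\ge k_\theta$ and every pair with $d(i,j)\in(\gamma^{k-1},\gamma^k]$, $Q_{ij}\ge\frac{1}{M\log^\theta(n)\gamma^k}$. Reducibility: a graph $G(V,E)$ is $p$-reducible if there is a constant $C>0$ such that for every pair $s\ne t$, among the first $C(\log|V|)^p$ vertices of the local $(s,t)$-path there is a vertex $u$ with an edge $\{u,v\}\in E$ such that $d(v,t)\le\lambda d(s,t)$ ($\lambda$ the constant from (H2)). "With high probability": probability $\to1$ as $n\to\infty$. *)

theory Defs
  imports "HOL-Probability.Probability"
begin

definition is_geometry :: "nat set \<Rightarrow> (nat \<Rightarrow> nat \<Rightarrow> real) \<Rightarrow> bool" where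
  "is_geometry V d \<longleftrightarrow> finite V \<and>
     (\<forall>u\<in>V. \<forall>v\<in>V. d u v = d v u \<and> 0 \<le> d u v \<and> (d u v = 0 \<longleftrightarrow> u = v))"

definition Pk :: "nat set \<Rightarrow> (nat \<Rightarrow> nat \<Rightarrow> real) \<Rightarrow> real \<Rightarrow> int \<Rightarrow> nat \<Rightarrow> nat" where
  "Pk V d \<gamma> k v = card {u\<in>V. \<gamma> powr (real_of_int k - 1) < d v u \<and> d v u \<le> \<gamma> powr (real_of_int k)}"

definition kvt :: "(nat \<Rightarrow> nat \<Rightarrow> real) \<Rightarrow> real \<Rightarrow> nat \<Rightarrow> nat \<Rightarrow> int" where
  "kvt d \<gamma> v t = (THE k::int. \<gamma> powr (real_of_int k - 1) < d v t \<and> d v t \<le> \<gamma> powr (real_of_int k))"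

definition Dlam :: "nat set \<Rightarrow> (nat \<Rightarrow> nat \<Rightarrow> real) \<Rightarrow> real \<Rightarrow> real \<Rightarrow> nat \<Rightarrow> nat \<Rightarrow> nat set" where
  "Dlam V d \<gamma> lam v t = {u\<in>V. d v u \<le> \<gamma> powr (real_of_int (kvt d \<gamma> v t)) \<and> d u t \<le> lam * d v t}"

definition H1 :: "nat set \<Rightarrow> (nat \<Rightarrow> nat \<Rightarrow> real) \<Rightarrow> real \<Rightarrow> real \<Rightarrow> real \<Rightarrow> bool" where
  "H1 V d \<gamma> A \<alpha> \<longleftrightarrow> A > 1 \<and> \<alpha> > 0 \<and>
     (\<forall>v\<in>V. \<forall>k::int. 1 \<le> k \<and> k \<le> \<lceil>log \<gamma> (real (card V))\<rceil> \<longrightarrow>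
        \<alpha> * \<gamma> powr (real_of_int k) \<le> real (Pk V d \<gamma> k v) \<and>
        real (Pk V d \<gamma> k v) \<le> A * \<gamma> powr (real_of_int k))"

definition H2 :: "nat set \<Rightarrow> (nat \<Rightarrow> nat \<Rightarrow> real) \<Rightarrow> real \<Rightarrow> real \<Rightarrow> real \<Rightarrow> bool" where
  "H2 V d \<gamma> \<phi> lam \<longleftrightarrow> \<phi> > 0 \<and> 0 < lam \<and> lam < 1 \<and>
     (\<forall>v\<in>V. \<forall>t\<in>V. v \<noteq> t \<longrightarrow>
        real (card (Dlam V d \<gamma> lam v t)) \<ge> \<phi> * \<gamma> powr (real_of_int (kvt d \<gamma> v t)))"

definition coherent :: "nat set \<Rightarrow> (nat \<Rightarrow> nat \<Rightarrow> real) \<Rightarrow> real \<Rightarrow> real \<Rightarrow> real \<Rightarrow> real \<Rightarrow> real \<Rightarrow> bool" where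
  "coherent V d \<gamma> A \<alpha> \<phi> lam \<longleftrightarrow> is_geometry V d \<and> \<gamma> > 1 \<and> H1 V d \<gamma> A \<alpha> \<and> H2 V d \<gamma> \<phi> lam"

text \<open>Substrate E0 with fixed local connection: conn t s is the local t-connection of s.\<close>
definition substrate :: "nat set \<Rightarrow> (nat \<Rightarrow> nat \<Rightarrow> real) \<Rightarrow> nat set set \<Rightarrow> (nat \<Rightarrow> nat \<Rightarrow> nat) \<Rightarrow> bool" where
  "substrate V d E0 conn \<longleftrightarrow>
     E0 \<subseteq> {{u, v} | u v. u \<in> V \<and> v \<in> V \<and> u \<noteq> v} \<and>
     (\<forall>s\<in>V. \<forall>t\<in>V. s \<noteq> t \<longrightarrow>
        conn t s \<in> V \<and> {s, conn t s} \<in> E0 \<and> d (conn t s) t \<le> d s t - 1)"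

text \<open>Vertices of the local (s,t)-path with index < L (index 0 is s; the path stops at t).\<close>
definition path_prefix :: "(nat \<Rightarrow> nat \<Rightarrow> nat) \<Rightarrow> nat \<Rightarrow> nat \<Rightarrow> real \<Rightarrow> nat set" where
  "path_prefix conn s t L =
     {(conn t ^^ k) s | k. real k < L \<and> (\<forall>j<k. (conn t ^^ j) s \<noteq> t)}"

definition reducible_with :: "nat set \<Rightarrow> (nat \<Rightarrow> nat \<Rightarrow> real) \<Rightarrow> nat set set \<Rightarrow> real \<Rightarrow>
    (nat \<Rightarrow> nat \<Rightarrow> nat) \<Rightarrow> real \<Rightarrow> real \<Rightarrow> bool" where
  "reducible_with V d E lam conn p C \<longleftrightarrow>
     (\<forall>s\<in>V. \<forall>t\<in>V. s \<noteq> t \<longrightarrow>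
        (\<exists>u\<in>path_prefix conn s t (C * (ln (real (card V))) powr p).
           \<exists>v\<in>V. {u, v} \<in> E \<and> d v t \<le> lam * d s t))"

definition uniformly_rich :: "nat \<Rightarrow> (nat \<Rightarrow> nat \<Rightarrow> real) \<Rightarrow> real \<Rightarrow> real \<Rightarrow> real \<Rightarrow> real \<Rightarrow>
    (nat \<Rightarrow> nat \<Rightarrow> real) \<Rightarrow> bool" where
  "uniformly_rich n d \<gamma> \<alpha> \<theta> M Q \<longleftrightarrow>
     (\<forall>k::int. real_of_int k \<ge> (\<theta> * ln (ln (real n)) - ln \<alpha>) / ln \<gamma> \<longrightarrow>
        (\<forall>i j. i < j \<and> j < n \<and> \<gamma> powr (real_of_int k - 1) < d i j \<and> d i j \<le> \<gamma> powr (real_of_int k) \<longrightarrow>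
           Q i j \<ge> 1 / (M * (ln (real n)) powr \<theta> * \<gamma> powr (real_of_int k))))"

definition random_edges :: "nat \<Rightarrow> (nat \<Rightarrow> nat \<Rightarrow> real) \<Rightarrow> nat set set pmf" where
  "random_edges n Q =
     map_pmf (\<lambda>b. {{i, j} | i j. i < j \<and> j < n \<and> b (i, j)})
       (Pi_pmf {(i, j). i < j \<and> j < n} False (\<lambda>(i, j). bernoulli_pmf (Q i j)))"

end

theory Submission
  imports Defs "HOL-Real_Asymp.Real_Asymp"
begin


lemma shell_ceil:
  fixes g x :: real assumes g: "g > 1" and x: "x > 0"
  shows "g powr (real_of_int \<lceil>log g x\<rceil> - 1) < x \<and> x \<le> g powr (real_of_int \<lceil>log g x\<rceil>)"
proof -
  have e: "g powr (log g x) = x" using g x by simp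
  have "real_of_int \<lceil>log g x\<rceil> - 1 < log g x" by linarith
  hence 1: "g powr (real_of_int \<lceil>log g x\<rceil> - 1) < g powr (log g x)" using g by simp
  have "log g x \<le> real_of_int \<lceil>log g x\<rceil>" by linarith
  hence 2: "g powr (log g x) \<le> g powr (real_of_int \<lceil>log g x\<rceil>)" using g by simp
  show ?thesis using 1 2 e by simp
qed

lemma shell_unique:
  fixes g x :: real assumes g: "g > 1" and x: "x > 0"
    and h: "g powr (real_of_int k - 1) < x" "x \<le> g powr (real_of_int k)"
  shows "k = \<lceil>log g x\<rceil>"
proof -
  have e: "g powr (log g x) = x" using g x by simp
  have "real_of_int k - 1 < log g x" using h(1) e g
    by (metis powr_less_cancel_iff)
  moreover have "log g x \<le> real_of_int k" using h(2) e g
    by (metis powr_le_cancel_iff)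
  ultimately show ?thesis by linarith
qed

lemma kvt_eq:
  assumes g: "g > 1" and x: "d v t > 0"
  shows "kvt d g v t = \<lceil>log g (d v t)\<rceil>"
  unfolding kvt_def
proof (rule the_equality)
  show "g powr (real_of_int \<lceil>log g (d v t)\<rceil> - 1) < d v t \<and> d v t \<le> g powr (real_of_int \<lceil>log g (d v t)\<rceil>)"
    using shell_ceil[OF g x] .
  fix k assume "g powr (real_of_int k - 1) < d v t \<and> d v t \<le> g powr (real_of_int k)"
  thus "k = \<lceil>log g (d v t)\<rceil>" using shell_unique[OF g x] by blast
qed

lemma prob_none:
  fixes I S :: "(nat \<times> nat) set" and q :: "nat \<Rightarrow> nat \<Rightarrow> real"
  assumes I: "finite I" and S: "S \<subseteq> I" and q: "\<And>i j. (i,j) \<in> I \<Longrightarrow> 0 \<le> q i j \<and> q i j \<le> 1"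
  shows "measure_pmf.prob (Pi_pmf I False (\<lambda>(i,j). bernoulli_pmf (q i j))) {b. \<forall>p\<in>S. \<not> b p}
         = (\<Prod>(i,j)\<in>S. 1 - q i j)"
proof -
  define B where "B = (\<lambda>p. if p \<in> S then {False} else (UNIV::bool set))"
  have eq: "{b. \<forall>p\<in>S. \<not> b p} = Pi I B" using S unfolding B_def Pi_def by auto
  have "measure_pmf.prob (Pi_pmf I False (\<lambda>(i,j). bernoulli_pmf (q i j))) (Pi I B)
      = (\<Prod>x\<in>I. measure_pmf.prob ((\<lambda>(i,j). bernoulli_pmf (q i j)) x) (B x))"
    by (rule measure_Pi_pmf_Pi[OF I])
  also have "\<dots> = (\<Prod>x\<in>I. if x \<in> S then (\<lambda>(i,j). 1 - q i j) x else 1)"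
  proof (rule prod.cong[OF refl])
    fix x assume x: "x \<in> I"
    obtain i j where ij: "x = (i,j)" by fastforce
    show "measure_pmf.prob ((\<lambda>(i,j). bernoulli_pmf (q i j)) x) (B x) = (if x \<in> S then (\<lambda>(i,j). 1 - q i j) x else 1)"
      using q[of i j] x ij unfolding B_def
      by (auto simp: measure_pmf_single pmf_bernoulli_False)
  qed
  also have "\<dots> = (\<Prod>x\<in>S. if x \<in> S then (\<lambda>(i,j). 1 - q i j) x else 1)"
    by (rule prod.mono_neutral_right[OF I S]) auto
  also have "\<dots> = (\<Prod>x\<in>S. (\<lambda>(i,j). 1 - q i j) x)" by simp
  finally show ?thesis using eq by simp
qed

lemma prod_exp_bound:
  fixes S :: "'a set" and f :: "'a \<Rightarrow> real"
  assumes "finite S" "\<And>x. x \<in> S \<Longrightarrow> f x \<le> 1"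
  shows "(\<Prod>x\<in>S. 1 - f x) \<le> exp (- (\<Sum>x\<in>S. f x))"
proof -
  have "(\<Prod>x\<in>S. 1 - f x) \<le> (\<Prod>x\<in>S. exp (- f x))"
    by (rule prod_mono) (use assms in \<open>auto simp: exp_ge_add_one_self[of "- f _", simplified]\<close>)
  also have "\<dots> = exp (\<Sum>x\<in>S. - f x)" by (rule exp_sum[OF assms(1), symmetric])
  also have "\<dots> = exp (- (\<Sum>x\<in>S. f x))" by (simp add: sum_negf)
  finally show ?thesis .
qed




locale RG =
  fixes n :: nat and dd :: "nat \<Rightarrow> nat \<Rightarrow> real" and E0 :: "nat set set"
    and cn :: "nat \<Rightarrow> nat \<Rightarrow> nat" and q :: "nat \<Rightarrow> nat \<Rightarrow> real"
    and g A \<alpha> \<phi> lam \<theta> M :: real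
  assumes coh: "coherent {..<n} dd g A \<alpha> \<phi> lam"
    and sub: "substrate {..<n} dd E0 cn"
    and theta: "\<theta> > 0" and Mpos: "M > 0"
    and qprob: "\<And>i j. i < j \<Longrightarrow> j < n \<Longrightarrow> 0 \<le> q i j \<and> q i j \<le> 1"
    and rich: "uniformly_rich n dd g \<alpha> \<theta> M q"
begin

definition "ell = ln (real n)"
definition "B0 = A * g / ((g - 1) * \<alpha>)"
definition "RR = 2 * B0 * ell powr \<theta> / \<phi>"
definition "CC = 8 * M / \<phi>"
definition "Lr = CC * ell powr (\<theta> + 1)"
definition "kth = (\<theta> * ln ell - ln \<alpha>) / ln g"
definition "k1 = \<lceil>kth\<rceil> - 1"
definition "pth s t j = (cn t ^^ j) s"
definition "pred s t E = (\<exists>u\<in>path_prefix cn s t Lr. \<exists>v\<in>{..<n}. {u,v} \<in> E \<and> dd v t \<le> lam * dd s t)"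

lemma g1: "g > 1" using coh by (simp add: coherent_def)
lemma A1: "A > 1" and alpha0: "\<alpha> > 0" using coh by (auto simp: coherent_def H1_def)
lemma phi0: "\<phi> > 0" and lam0: "lam > 0" and lam1: "lam < 1"
  using coh by (auto simp: coherent_def H2_def)

lemma dsym: "u < n \<Longrightarrow> v < n \<Longrightarrow> dd u v = dd v u"
  using coh by (auto simp: coherent_def is_geometry_def)
lemma dnn: "u < n \<Longrightarrow> v < n \<Longrightarrow> dd u v \<ge> 0"
  using coh by (auto simp: coherent_def is_geometry_def)
lemma d0: "u < n \<Longrightarrow> v < n \<Longrightarrow> dd u v = 0 \<longleftrightarrow> u = v"
  using coh by (auto simp: coherent_def is_geometry_def)

lemma H1a: "v < n \<Longrightarrow> 1 \<le> k \<Longrightarrow> k \<le> \<lceil>log g (real n)\<rceil> \<Longrightarrow> real (Pk {..<n} dd g k v) \<le> A * g powr (real_of_int k)"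
  using coh by (auto simp: coherent_def H1_def)

lemma H2a: "v < n \<Longrightarrow> t < n \<Longrightarrow> v \<noteq> t \<Longrightarrow>
   real (card (Dlam {..<n} dd g lam v t)) \<ge> \<phi> * g powr (real_of_int (kvt dd g v t))"
  using coh by (auto simp: coherent_def H2_def)

lemma conn: "s < n \<Longrightarrow> t < n \<Longrightarrow> s \<noteq> t \<Longrightarrow> cn t s < n \<and> {s, cn t s} \<in> E0 \<and> dd (cn t s) t \<le> dd s t - 1"
  using sub by (auto simp: substrate_def)

lemma dge1: "u < n \<Longrightarrow> t < n \<Longrightarrow> u \<noteq> t \<Longrightarrow> dd u t \<ge> 1"
  using conn[of u t] dnn[of "cn t u" t] by auto

lemma path_dec:
  assumes "x < n" "t < n"
  shows "(\<forall>l<i. (cn t ^^ l) x \<noteq> t) \<Longrightarrow> (cn t ^^ i) x < n \<and> dd ((cn t ^^ i) x) t \<le> dd x t - real i"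
proof (induction i)
  case 0 then show ?case using assms by simp
next
  case (Suc i)
  then have IH: "(cn t ^^ i) x < n" "dd ((cn t ^^ i) x) t \<le> dd x t - real i" by auto
  have ne: "(cn t ^^ i) x \<noteq> t" using Suc.prems by auto
  show ?case using conn[OF IH(1) assms(2) ne] IH(2) by auto
qed

lemma ell_pos_of: "n \<ge> 2 \<Longrightarrow> ell > 0" unfolding ell_def by simp

lemma B0_pos: "B0 > 0" unfolding B0_def using A1 g1 alpha0 by simp

lemma gkth: assumes "ell > 0" shows "g powr kth = ell powr \<theta> / \<alpha>"
proof -
  have "g powr kth = exp (kth * ln g)" using g1 by (simp add: powr_def)
  also have "kth * ln g = \<theta> * ln ell - ln \<alpha>" unfolding kth_def using g1 by simp
  also have "exp (\<theta> * ln ell - ln \<alpha>) = exp (\<theta> * ln ell) / exp (ln \<alpha>)" by (simp add: exp_diff)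
  also have "\<dots> = ell powr \<theta> / \<alpha>" using assms alpha0 by (simp add: powr_def mult.commute)
  finally show ?thesis .
qed

lemma geom_sum: "(\<Sum>i\<in>{1..m}. g ^ i) \<le> g * g ^ m / (g - 1)"
proof (induction m)
  case 0 then show ?case using g1 by simp
next
  case (Suc m)
  have "(\<Sum>i\<in>{1..Suc m}. g ^ i) = (\<Sum>i\<in>{1..m}. g ^ i) + g ^ Suc m" by simp
  also have "\<dots> \<le> g * g ^ m / (g - 1) + g ^ Suc m" using Suc by simp
  also have "\<dots> = g * g ^ Suc m / (g - 1)" using g1 by (simp add: field_simps)
  finally show ?case .
qed

end



context RG begin

lemma k1_le_K:
  assumes ell: "ell > 0" and big2: "ell powr \<theta> / \<alpha> \<le> real n"
  shows "k1 \<le> \<lceil>log g (real n)\<rceil>" "g powr k1 < ell powr \<theta> / \<alpha>"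
proof -
  have np: "real n > 0" using ell unfolding ell_def by (cases "n = 0") auto
  have "g powr kth \<le> g powr (log g (real n))" using gkth[OF ell] big2 np g1 by simp
  hence "kth \<le> log g (real n)" using g1 by simp
  moreover have "real_of_int k1 < kth" unfolding k1_def by linarith
  ultimately show "k1 \<le> \<lceil>log g (real n)\<rceil>" by linarith
  have "g powr k1 < g powr kth" using \<open>real_of_int k1 < kth\<close> g1 by simp
  thus "g powr k1 < ell powr \<theta> / \<alpha>" using gkth[OF ell] by simp
qed

lemma bad_count:
  assumes ell: "ell > 0" and big2: "ell powr \<theta> / \<alpha> \<le> real n" and u: "u < n"
  shows "real (card {v\<in>{..<n}. 1 < dd u v \<and> dd u v \<le> g powr k1}) \<le> B0 * ell powr \<theta>"
proof (cases "k1 \<le> 0")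
  case True
  have "g powr real_of_int k1 \<le> g powr (0::real)" by (rule powr_mono) (use True g1 in auto)
  hence "{v\<in>{..<n}. 1 < dd u v \<and> dd u v \<le> g powr k1} = {}" using g1 by auto
  thus ?thesis using B0_pos by (simp only: card.empty of_nat_0) simp
next
  case False
  define m where "m = nat k1"
  have m: "int m = k1" "m \<ge> 1" using False unfolding m_def by auto
  define sh where "sh i = {v\<in>{..<n}. g powr (real_of_int (int i) - 1) < dd u v \<and> dd u v \<le> g powr real_of_int (int i)}" for i :: nat
  have sub: "{v\<in>{..<n}. 1 < dd u v \<and> dd u v \<le> g powr k1} \<subseteq> (\<Union>i\<in>{1..m}. sh i)"
  proof
    fix v assume v: "v \<in> {v\<in>{..<n}. 1 < dd u v \<and> dd u v \<le> g powr k1}"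
    hence dp: "dd u v > 0" by auto
    define k where "k = \<lceil>log g (dd u v)\<rceil>"
    have sc: "g powr (real_of_int k - 1) < dd u v" "dd u v \<le> g powr real_of_int k"
      using shell_ceil[OF g1 dp] unfolding k_def by auto
    have e: "g powr (log g (dd u v)) = dd u v" using g1 dp by simp
    have "0 < log g (dd u v)" using v g1 dp by simp
    hence k1': "k \<ge> 1" unfolding k_def by linarith
    have "g powr (log g (dd u v)) \<le> g powr k1" using v e by simp
    hence "log g (dd u v) \<le> k1" using g1 by simp
    hence k2: "k \<le> k1" unfolding k_def by linarith
    have "nat k \<in> {1..m}" "int (nat k) = k" using k1' k2 m by auto
    thus "v \<in> (\<Union>i\<in>{1..m}. sh i)" using sc v unfolding sh_def by (intro UN_I[of "nat k"]) auto
  qed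
  have "card {v\<in>{..<n}. 1 < dd u v \<and> dd u v \<le> g powr k1} \<le> card (\<Union>i\<in>{1..m}. sh i)"
    by (rule card_mono[OF _ sub]) (auto simp: sh_def)
  also have "\<dots> \<le> (\<Sum>i\<in>{1..m}. card (sh i))"
    by (rule card_UN_le) (auto simp: sh_def)
  finally have c1: "real (card {v\<in>{..<n}. 1 < dd u v \<and> dd u v \<le> g powr k1}) \<le> (\<Sum>i\<in>{1..m}. real (card (sh i)))"
    by (simp flip: of_nat_sum)
  also have "\<dots> \<le> (\<Sum>i\<in>{1..m}. A * g ^ i)"
  proof (rule sum_mono)
    fix i assume i: "i \<in> {1..m}"
    have "card (sh i) = Pk {..<n} dd g (int i) u" unfolding sh_def Pk_def by simp
    moreover have "real (Pk {..<n} dd g (int i) u) \<le> A * g powr real_of_int (int i)"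
      using H1a[OF u, of "int i"] i k1_le_K[OF ell big2] m by auto
    moreover have "g powr real_of_int (int i) = g ^ i" using g1 by (simp add: powr_realpow)
    ultimately show "real (card (sh i)) \<le> A * g ^ i" by simp
  qed
  also have "\<dots> = A * (\<Sum>i\<in>{1..m}. g ^ i)" by (simp add: sum_distrib_left)
  also have "\<dots> \<le> A * (g * g ^ m / (g - 1))" using geom_sum[of m] A1 by (intro mult_left_mono) auto
  also have "g ^ m = g powr k1" using g1 m by (simp add: powr_realpow flip: m(1))
  also have "A * (g * g powr k1 / (g - 1)) \<le> A * (g * (ell powr \<theta> / \<alpha>) / (g - 1))"
    using k1_le_K(2)[OF ell big2] A1 g1 by (intro mult_left_mono divide_right_mono) auto
  also have "\<dots> = B0 * ell powr \<theta>" unfolding B0_def by (simp add: mult_ac)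
  finally show ?thesis .
qed

lemma q_lower:
  assumes ell: "ell > 0" and u: "u < n" and v: "v < n" and h1: "g powr k1 < dd u v" and h2: "dd u v \<le> g powr real_of_int k"
  shows "q (min u v) (max u v) \<ge> 1 / (M * ell powr \<theta> * g powr real_of_int k)"
proof -
  have dp: "dd u v > 0" using h1 g1 by (smt (verit) powr_gt_zero)
  hence uv: "u \<noteq> v" using d0[OF u v] by auto
  define k' where "k' = \<lceil>log g (dd u v)\<rceil>"
  have sc: "g powr (real_of_int k' - 1) < dd u v" "dd u v \<le> g powr real_of_int k'"
    using shell_ceil[OF g1 dp] unfolding k'_def by auto
  have e: "g powr (log g (dd u v)) = dd u v" using g1 dp by simp
  have "g powr k1 < g powr (log g (dd u v))" using h1 e by simp
  hence "k1 < log g (dd u v)" using g1 by simp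
  hence "k' \<ge> \<lceil>kth\<rceil>" unfolding k'_def k1_def by linarith
  hence kk: "real_of_int k' \<ge> kth" by linarith
  have "g powr (log g (dd u v)) \<le> g powr k" using h2 e by simp
  hence "log g (dd u v) \<le> k" using g1 by simp
  hence "k' \<le> k" unfolding k'_def by linarith
  hence gle: "g powr k' \<le> g powr k" using g1 by simp
  have dsame: "dd (min u v) (max u v) = dd u v" using dsym[OF u v] by (cases "u \<le> v") (auto simp: min_def max_def)
  have r: "q (min u v) (max u v) \<ge> 1 / (M * (ln (real n)) powr \<theta> * g powr (real_of_int k'))"
    using rich kk sc uv u v dsame unfolding uniformly_rich_def kth_def ell_def
    by (auto simp: min_def max_def)
  have pos: "M * ell powr \<theta> * g powr real_of_int k' > 0" using Mpos ell g1 by simp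
  have pos2: "M * ell powr \<theta> * g powr real_of_int k > 0" using Mpos ell g1 by simp
  have "1 / (M * ell powr \<theta> * g powr real_of_int k) \<le> 1 / (M * ell powr \<theta> * g powr real_of_int k')"
    using pos pos2 gle Mpos ell by (intro divide_left_mono mult_left_mono mult_pos_pos) auto
  thus ?thesis using r unfolding ell_def by simp
qed

end



context RG begin

definition "Good u t = {v\<in>Dlam {..<n} dd g lam u t. g powr k1 < dd u v}"

lemma good_sum:
  assumes ell: "ell > 0" and big2: "ell powr \<theta> / \<alpha> \<le> real n" and u: "u < n" and t: "t < n"
    and ut: "u \<noteq> t" and far: "dd u t > RR"
    and B2: "\<forall>v\<in>Dlam {..<n} dd g lam u t. dd u v > 1"
  shows "\<phi> / (2 * M * ell powr \<theta>) \<le> (\<Sum>v\<in>Good u t. q (min u v) (max u v))"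
proof -
  define D where "D = Dlam {..<n} dd g lam u t"
  define k where "k = kvt dd g u t"
  have dp: "dd u t > 0" using dge1[OF u t ut] by simp
  have kk: "k = \<lceil>log g (dd u t)\<rceil>" unfolding k_def by (rule kvt_eq[of g dd u t, OF g1 dp])
  have dk: "dd u t \<le> g powr k" using shell_ceil[OF g1 dp] kk by simp
  have cD: "real (card D) \<ge> \<phi> * g powr k" using H2a[OF u t ut] unfolding D_def k_def .
  have finD: "finite D" unfolding D_def Dlam_def by auto
  define Bad where "Bad = {v\<in>D. dd u v \<le> g powr k1}"
  have DU: "D \<subseteq> Good u t \<union> Bad" unfolding Good_def Bad_def D_def by auto
  have "card D \<le> card (Good u t \<union> Bad)" by (rule card_mono) (use finD DU in \<open>auto simp: Good_def D_def Bad_def\<close>)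
  also have "\<dots> \<le> card (Good u t) + card Bad" by (rule card_Un_le)
  finally have c1: "real (card D) \<le> real (card (Good u t)) + real (card Bad)" by simp
  have "Bad \<subseteq> {v\<in>{..<n}. 1 < dd u v \<and> dd u v \<le> g powr k1}"
    using B2 unfolding Bad_def D_def Dlam_def by auto
  hence "card Bad \<le> card {v\<in>{..<n}. 1 < dd u v \<and> dd u v \<le> g powr k1}" by (intro card_mono) auto
  hence c2: "real (card Bad) \<le> B0 * ell powr \<theta>" using bad_count[OF ell big2 u] by linarith
  have "g powr k > RR" using far dk by simp
  hence "\<phi> * g powr k > 2 * B0 * ell powr \<theta>" using phi0 unfolding RR_def by (simp add: field_simps)
  hence cG: "real (card (Good u t)) \<ge> \<phi> * g powr k / 2" using c1 c2 cD by linarith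
  have tm: "q (min u v) (max u v) \<ge> 1 / (M * ell powr \<theta> * g powr k)" if v: "v \<in> Good u t" for v
  proof -
    have "v < n" "g powr k1 < dd u v" "dd u v \<le> g powr k" using v unfolding Good_def Dlam_def k_def by auto
    thus ?thesis using q_lower[OF ell u] by blast
  qed
  have "(\<Sum>v\<in>Good u t. q (min u v) (max u v)) \<ge> (\<Sum>v\<in>Good u t. 1 / (M * ell powr \<theta> * g powr k))"
    by (rule sum_mono) (use tm in auto)
  also have "(\<Sum>v\<in>Good u t. 1 / (M * ell powr \<theta> * g powr k)) = real (card (Good u t)) / (M * ell powr \<theta> * g powr k)"
    by simp
  finally have s1: "(\<Sum>v\<in>Good u t. q (min u v) (max u v)) \<ge> real (card (Good u t)) / (M * ell powr \<theta> * g powr k)" .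
  have pos: "M * ell powr \<theta> * g powr k > 0" using Mpos ell g1 by simp
  have "\<phi> / (2 * M * ell powr \<theta>) = (\<phi> * g powr k / 2) / (M * ell powr \<theta> * g powr k)"
    using g1 by (simp add: field_simps)
  also have "\<dots> \<le> real (card (Good u t)) / (M * ell powr \<theta> * g powr k)"
    using cG pos by (intro divide_right_mono) auto
  finally show ?thesis using s1 by linarith
qed

end



context RG begin

definition "fb b = {{i, j} | i j. i < j \<and> j < n \<and> b (i, j)}"
definition "II = {(i, j). i < j \<and> j < n}"

lemma prefix_mem: "real k < L \<Longrightarrow> (\<forall>j<k. pth s t j \<noteq> t) \<Longrightarrow> pth s t k \<in> path_prefix cn s t L"
  unfolding path_prefix_def pth_def by blast

lemma shift: "(cn t ^^ l) (pth s t j) = pth s t (l + j)"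
  by (simp add: pth_def funpow_add)

lemma seg:
  assumes s: "s < n" and t: "t < n" and h: "\<forall>l<j+i. pth s t l \<noteq> t"
  shows "pth s t j < n" "pth s t (i + j) < n \<and> dd (pth s t (i + j)) t \<le> dd (pth s t j) t - real i"
proof -
  show pj: "pth s t j < n" using path_dec[OF s t, of j] h unfolding pth_def by auto
  have "\<forall>l<i. (cn t ^^ l) (pth s t j) \<noteq> t" using h by (simp add: shift)
  from path_dec[OF pj t, of i, OF this] show "pth s t (i + j) < n \<and> dd (pth s t (i + j)) t \<le> dd (pth s t j) t - real i"
    by (simp add: shift)
qed

lemma minmax_eq: "min (u::nat) v = min u' v' \<Longrightarrow> max u v = max u' v' \<Longrightarrow> (u = u' \<and> v = v') \<or> (u = v' \<and> v = u')"
  by (auto simp: min_def max_def split: if_splits)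

lemma pair_cases:
  assumes ell: "ell > 0" and big2: "ell powr \<theta> / \<alpha> \<le> real n"
    and big3: "3 * ell \<le> (Lr - RR - 1) * \<phi> / (2 * M * ell powr \<theta>)"
    and s: "s < n" and t: "t < n" and st: "s \<noteq> t"
  shows "(\<forall>E. E0 \<subseteq> E \<longrightarrow> pred s t E) \<or>
         (\<exists>S. S \<subseteq> II \<and> finite S \<and> 3 * ell \<le> (\<Sum>(i,j)\<in>S. q i j) \<and> (\<forall>b. (\<exists>x\<in>S. b x) \<longrightarrow> pred s t (E0 \<union> fb b)))"
proof (cases "\<exists>m. real m \<le> Lr \<and> pth s t m = t")
  case True
  define m0 where "m0 = (LEAST m. real m \<le> Lr \<and> pth s t m = t)"
  have m0: "real m0 \<le> Lr" "pth s t m0 = t" using LeastI_ex[OF True] unfolding m0_def by auto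
  have before: "\<forall>l<m0. pth s t l \<noteq> t"
  proof (intro allI impI)
    fix l assume l: "l < m0"
    hence "\<not> (real l \<le> Lr \<and> pth s t l = t)" unfolding m0_def by (rule not_less_Least)
    thus "pth s t l \<noteq> t" using l m0(1) by auto
  qed
  have "m0 \<noteq> 0" using m0(2) st by (cases m0) (auto simp: pth_def)
  then obtain k where k: "m0 = Suc k" by (cases m0) auto
  define u where "u = pth s t k"
  have un: "u < n" "u \<noteq> t" using seg(1)[OF s t, of k 0] before k unfolding u_def by auto
  have cu: "cn t u = t" using m0(2) k unfolding u_def pth_def by simp
  have E0: "{u, t} \<in> E0" using conn[OF un(1) t un(2)] cu by simp
  have pre: "u \<in> path_prefix cn s t Lr" unfolding u_def
    by (rule prefix_mem) (use m0 before k in auto)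
  have "dd t t \<le> lam * dd s t" using d0[OF t t] dnn[OF s t] lam0 by simp
  hence "\<forall>E. E0 \<subseteq> E \<longrightarrow> pred s t E" using pre E0 t unfolding pred_def by blast
  thus ?thesis by blast
next
  case False
  hence noT: "\<And>m. real m \<le> Lr \<Longrightarrow> pth s t m \<noteq> t" by auto
  define X where "X = Lr - RR - 1"
  define J where "J = {..<nat \<lceil>X\<rceil>}"
  have RR0: "RR \<ge> 0" unfolding RR_def using B0_pos phi0 by simp
  have jX: "real j < X" if "j \<in> J" for j
  proof -
    have "int j < \<lceil>X\<rceil>" using that unfolding J_def by auto
    hence "real_of_int (int j) < X" by (simp only: less_ceiling_iff)
    thus ?thesis by simp
  qed
  have allbefore: "\<forall>l<j+i. pth s t l \<noteq> t" if "real j + real i \<le> Lr" for i j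
    using noT that by auto
  have pj: "pth s t j < n \<and> pth s t j \<noteq> t \<and> dd (pth s t j) t \<le> dd s t \<and> pth s t j \<in> path_prefix cn s t Lr"
    if j: "j \<in> J" for j
  proof -
    have jl: "real j < Lr" using jX[OF j] RR0 unfolding X_def by simp
    have a: "\<forall>l<j. pth s t l \<noteq> t" using noT jl by auto
    have "pth s t j < n \<and> dd (pth s t j) t \<le> dd (pth s t 0) t - real j"
      using seg(2)[OF s t, of 0 j] a by simp
    moreover have "pth s t 0 = s" by (simp add: pth_def)
    ultimately show ?thesis using noT[of j] jl prefix_mem[OF jl a] by auto
  qed
  have far: "dd (pth s t j) t > RR" if j: "j \<in> J" for j
  proof (rule ccontr)
    assume "\<not> RR < dd (pth s t j) t"
    hence le: "dd (pth s t j) t \<le> RR" by simp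
    define i where "i = nat \<lfloor>RR\<rfloor>"
    have i: "real i \<le> RR" "RR < real i + 1" unfolding i_def using RR0 by linarith+
    have tot: "real j + real i \<le> Lr" using jX[OF j] i unfolding X_def by linarith
    have "pth s t (i + j) < n \<and> dd (pth s t (i + j)) t \<le> dd (pth s t j) t - real i"
      using seg(2)[OF s t allbefore[OF tot]] .
    moreover have "pth s t (i + j) \<noteq> t" using noT[of "i+j"] tot by (simp add: add.commute)
    ultimately have "1 \<le> dd (pth s t j) t - real i" using dge1[OF _ t] by force
    thus False using le i by linarith
  qed
  show ?thesis
  proof (cases "\<exists>j\<in>J. \<exists>v\<in>Dlam {..<n} dd g lam (pth s t j) t. dd (pth s t j) v \<le> 1")
    case True
    then obtain j v where j: "j \<in> J" and v: "v \<in> Dlam {..<n} dd g lam (pth s t j) t" and dv: "dd (pth s t j) v \<le> 1"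
      by blast
    define u where "u = pth s t j"
    have u: "u < n" "u \<noteq> t" "dd u t \<le> dd s t" "u \<in> path_prefix cn s t Lr" using pj[OF j] unfolding u_def by auto
    have vn: "v < n" and vt: "dd v t \<le> lam * dd u t" using v unfolding Dlam_def u_def by auto
    have dut: "dd u t > 0" using dge1[OF u(1) t u(2)] by simp
    have uv: "u \<noteq> v"
    proof
      assume "u = v" thus False using vt dut lam1 by (smt (verit) mult_less_cancel_right2)
    qed
    have "dd (cn v u) v \<le> 0" using conn[OF u(1) vn uv] dv unfolding u_def by simp
    hence "cn v u = v" using dnn[of "cn v u" v] d0[of "cn v u" v] conn[OF u(1) vn uv] vn by force
    hence E0: "{u, v} \<in> E0" using conn[OF u(1) vn uv] by simp
    have "dd v t \<le> lam * dd s t" using vt u(3) lam0 by (smt (verit) mult_left_mono)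
    hence "\<forall>E. E0 \<subseteq> E \<longrightarrow> pred s t E" using u(4) E0 vn unfolding pred_def by blast
    thus ?thesis by blast
  next
    case False
    hence B2: "\<And>j v. j \<in> J \<Longrightarrow> v \<in> Dlam {..<n} dd g lam (pth s t j) t \<Longrightarrow> dd (pth s t j) v > 1"
      by force
    define h where "h = (\<lambda>(u::nat, v::nat). (min u v, max u v))"
    define U where "U = pth s t ` J"
    define T where "T = Sigma U (\<lambda>u. Good u t)"
    define S where "S = h ` T"
    have finU: "finite U" unfolding U_def J_def by simp
    have finG: "finite (Good u t)" for u unfolding Good_def Dlam_def by simp
    have finT: "finite T" unfolding T_def using finU finG by simp
    have Tprop: "u < n \<and> v < n \<and> u \<noteq> t \<and> dd u t > 0 \<and> dd v t \<le> lam * dd u t \<and> u \<noteq> v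
       \<and> dd u t \<le> dd s t \<and> u \<in> path_prefix cn s t Lr" if x: "(u, v) \<in> T" for u v
    proof -
      obtain j where j: "j \<in> J" "u = pth s t j" using x unfolding T_def U_def by auto
      have v: "v < n" "dd v t \<le> lam * dd u t" using x unfolding T_def Good_def Dlam_def by auto
      have p: "u < n" "u \<noteq> t" "dd u t \<le> dd s t" "u \<in> path_prefix cn s t Lr" using pj[OF j(1)] j(2) by auto
      have dut: "dd u t > 0" using dge1[OF p(1) t p(2)] by simp
      have "u \<noteq> v" using v(2) dut lam1 by (smt (verit) mult_less_cancel_right2)
      thus ?thesis using v p dut by auto
    qed
    have injh: "inj_on h T"
    proof (rule inj_onI)
      fix x y assume x: "x \<in> T" and y: "y \<in> T" and e: "h x = h y"
      obtain u v u' v' where xy: "x = (u, v)" "y = (u', v')" by fastforce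
      have "(u = u' \<and> v = v') \<or> (u = v' \<and> v = u')" using e minmax_eq unfolding xy h_def by auto
      moreover have False if "u = v'" "v = u'"
      proof -
        have a: "dd v t \<le> lam * dd u t" "dd u t > 0" using Tprop[of u v] x xy by auto
        have b: "dd u t \<le> lam * dd v t" using Tprop[of u' v'] y xy that by auto
        have "dd u t \<le> lam * (lam * dd u t)" using a b lam0 by (smt (verit) mult_left_mono)
        moreover have "lam * lam < 1" using lam0 lam1 by (smt (verit) mult_less_cancel_right2 mult_pos_pos)
        ultimately show False using a(2) by (smt (verit) mult.assoc mult_less_cancel_right2)
      qed
      ultimately show "x = y" using xy by auto
    qed
    have SII: "S \<subseteq> II"
    proof
      fix x assume "x \<in> S"
      then obtain u v where x: "x = h (u, v)" "(u, v) \<in> T" unfolding S_def by auto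
      have "u < n" "v < n" "u \<noteq> v" using Tprop[OF x(2)] by auto
      thus "x \<in> II" unfolding x h_def II_def by (auto simp: min_def max_def)
    qed
    have finS: "finite S" unfolding S_def using finT by simp
    have injp: "inj_on (pth s t) J"
    proof -
      have "pth s t j \<noteq> pth s t j'" if j: "j \<in> J" "j' \<in> J" "j < j'" for j j'
      proof -
        obtain i where i: "j' = i + j" "i > 0" using j(3) by (metis add.commute less_imp_add_positive)
        have tot: "real j + real i \<le> Lr" using jX[OF j(2)] RR0 i unfolding X_def by simp
        have "dd (pth s t j') t \<le> dd (pth s t j) t - real i"
          using seg(2)[OF s t allbefore[OF tot]] i by simp
        thus ?thesis using i by auto
      qed
      thus ?thesis unfolding inj_on_def by (metis linorder_neqE_nat)
    qed
    have "(\<Sum>(i,j)\<in>S. q i j) = (\<Sum>x\<in>T. (\<lambda>(i,j). q i j) (h x))"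
      unfolding S_def by (rule sum.reindex[OF injh, unfolded comp_def])
    also have "\<dots> = (\<Sum>(u,v)\<in>T. q (min u v) (max u v))"
      by (rule sum.cong) (auto simp: h_def)
    also have "\<dots> = (\<Sum>u\<in>U. \<Sum>v\<in>Good u t. q (min u v) (max u v))"
      unfolding T_def by (rule sum.Sigma[symmetric]) (use finU finG in auto)
    also have "\<dots> \<ge> (\<Sum>u\<in>U. \<phi> / (2 * M * ell powr \<theta>))"
    proof (rule sum_mono)
      fix u assume u: "u \<in> U"
      then obtain j where j: "j \<in> J" "u = pth s t j" unfolding U_def by auto
      show "\<phi> / (2 * M * ell powr \<theta>) \<le> (\<Sum>v\<in>Good u t. q (min u v) (max u v))"
        using good_sum[OF ell big2, of u t] pj[OF j(1)] far[OF j(1)] B2[OF j(1)] t j(2) by auto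
    qed
    also have "(\<Sum>u\<in>U. \<phi> / (2 * M * ell powr \<theta>)) = real (card J) * (\<phi> / (2 * M * ell powr \<theta>))"
      unfolding U_def using card_image[OF injp] by simp
    also have "real (card J) * (\<phi> / (2 * M * ell powr \<theta>)) \<ge> X * (\<phi> / (2 * M * ell powr \<theta>))"
      unfolding J_def using phi0 Mpos ell by (intro mult_right_mono) (auto, linarith)
    finally have sumS: "3 * ell \<le> (\<Sum>(i,j)\<in>S. q i j)" using big3 unfolding X_def by simp
    have predS: "pred s t (E0 \<union> fb b)" if b: "\<exists>x\<in>S. b x" for b
    proof -
      obtain u v where uv: "(u, v) \<in> T" "b (h (u, v))" using b unfolding S_def by auto
      have P: "u < n \<and> v < n \<and> u \<noteq> t \<and> dd u t > 0 \<and> dd v t \<le> lam * dd u t \<and> u \<noteq> v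
       \<and> dd u t \<le> dd s t \<and> u \<in> path_prefix cn s t Lr" by (rule Tprop[OF uv(1)])
      have "{u, v} = {min u v, max u v}" by (auto simp: min_def max_def)
      moreover have "min u v < max u v" "max u v < n" using P by (auto simp: min_def max_def)
      ultimately have "{u, v} \<in> fb b" using uv(2) unfolding fb_def h_def by auto
      moreover have "dd v t \<le> lam * dd s t" using P lam0 by (smt (verit) mult_left_mono)
      ultimately show ?thesis using P unfolding pred_def by blast
    qed
    show ?thesis using SII finS sumS predS by blast
  qed
qed

end



lemma big3_lemma:
  fixes l P B M \<phi> :: real
  assumes l: "l \<ge> 1" and P: "P \<ge> 1" and M: "M > 0" and ph: "\<phi> > 0" and lb: "l \<ge> B / M + \<phi> / (2 * M)"
  shows "3 * l \<le> ((8 * M / \<phi>) * (l * P) - 2 * B * P / \<phi> - 1) * \<phi> / (2 * M * P)"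
proof -
  have eq: "((8 * M / \<phi>) * (l * P) - 2 * B * P / \<phi> - 1) * \<phi> / (2 * M * P) = 4 * l - B / M - \<phi> / (2 * M * P)"
    using M ph P by (simp add: field_simps)
  have "\<phi> / (2 * M * P) \<le> \<phi> / (2 * M)"
    using M ph P by (intro divide_left_mono) (auto simp: mult_le_cancel_left1)
  thus ?thesis unfolding eq using lb l by linarith
qed

context RG begin

lemma exp_bound: assumes "ell > 0" shows "exp (- (3 * ell)) = 1 / real n ^ 3"
proof -
  have np: "real n > 0" using assms unfolding ell_def by (cases "n = 0") auto
  have "exp (3 * ell) = exp ell ^ 3" using exp_of_nat_mult[of 3 ell] by simp
  also have "exp ell = real n" unfolding ell_def using np by simp
  finally show ?thesis by (simp add: exp_minus field_simps)
qed

lemma pair_prob: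
  assumes ell: "ell > 0" and big2: "ell powr \<theta> / \<alpha> \<le> real n"
    and big3: "3 * ell \<le> (Lr - RR - 1) * \<phi> / (2 * M * ell powr \<theta>)"
    and s: "s < n" and t: "t < n"
  shows "measure_pmf.prob (Pi_pmf II False (\<lambda>(i,j). bernoulli_pmf (q i j)))
           {b. s \<noteq> t \<and> \<not> pred s t (E0 \<union> fb b)} \<le> 1 / real n ^ 3"
proof (cases "s = t")
  case True thus ?thesis by simp
next
  case st: False
  let ?P = "Pi_pmf II False (\<lambda>(i,j). bernoulli_pmf (q i j))"
  from pair_cases[OF ell big2 big3 s t st] show ?thesis
  proof
    assume "\<forall>E. E0 \<subseteq> E \<longrightarrow> pred s t E"
    hence e: "{b. s \<noteq> t \<and> \<not> pred s t (E0 \<union> fb b)} = {}" by auto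
    show ?thesis unfolding e by simp
  next
    assume "\<exists>S. S \<subseteq> II \<and> finite S \<and> 3 * ell \<le> (\<Sum>(i,j)\<in>S. q i j) \<and> (\<forall>b. (\<exists>x\<in>S. b x) \<longrightarrow> pred s t (E0 \<union> fb b))"
    then obtain S where S: "S \<subseteq> II" "finite S" "3 * ell \<le> (\<Sum>(i,j)\<in>S. q i j)"
      "\<And>b. (\<exists>x\<in>S. b x) \<Longrightarrow> pred s t (E0 \<union> fb b)" by blast
    have finII: "finite II" unfolding II_def by (rule finite_subset[of _ "{..<n} \<times> {..<n}"]) auto
    have qI: "\<And>i j. (i, j) \<in> II \<Longrightarrow> 0 \<le> q i j \<and> q i j \<le> 1" using qprob unfolding II_def by auto
    have "measure_pmf.prob ?P {b. s \<noteq> t \<and> \<not> pred s t (E0 \<union> fb b)} \<le> measure_pmf.prob ?P {b. \<forall>p\<in>S. \<not> b p}"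
      by (rule measure_pmf.finite_measure_mono) (use S(4) in auto)
    also have "\<dots> = (\<Prod>(i,j)\<in>S. 1 - q i j)" by (rule prob_none[OF finII S(1) qI])
    also have "\<dots> = (\<Prod>x\<in>S. 1 - (\<lambda>(i,j). q i j) x)" by (simp add: case_prod_beta)
    also have "\<dots> \<le> exp (- (\<Sum>x\<in>S. (\<lambda>(i,j). q i j) x))"
      by (rule prod_exp_bound[OF S(2)]) (use S(1) qI in auto)
    also have "\<dots> \<le> exp (- (3 * ell))" using S(3) by simp
    also have "\<dots> = 1 / real n ^ 3" by (rule exp_bound[OF ell])
    finally show ?thesis .
  qed
qed

lemma prob_bound:
  assumes ell: "ell > 0" and big2: "ell powr \<theta> / \<alpha> \<le> real n"
    and big3: "3 * ell \<le> (Lr - RR - 1) * \<phi> / (2 * M * ell powr \<theta>)"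
  shows "measure_pmf.prob (random_edges n q) {Eq. reducible_with {..<n} dd (E0 \<union> Eq) lam cn (\<theta> + 1) CC} \<ge> 1 - 1 / real n"
proof -
  let ?P = "Pi_pmf II False (\<lambda>(i,j). bernoulli_pmf (q i j))"
  have np: "real n > 0" using ell unfolding ell_def by (cases "n = 0") auto
  have re: "random_edges n q = map_pmf fb ?P"
    unfolding random_edges_def II_def by (simp add: fb_def[abs_def])
  define Ev where "Ev = (\<lambda>(s,t). {b. s \<noteq> t \<and> \<not> pred s t (E0 \<union> fb b)})"
  have red: "reducible_with {..<n} dd E lam cn (\<theta> + 1) CC \<longleftrightarrow> (\<forall>s<n. \<forall>t<n. s \<noteq> t \<longrightarrow> pred s t E)" for E
    unfolding reducible_with_def pred_def Lr_def ell_def by auto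
  have eq1: "measure_pmf.prob (random_edges n q) {Eq. reducible_with {..<n} dd (E0 \<union> Eq) lam cn (\<theta> + 1) CC}
      = measure_pmf.prob ?P {b. reducible_with {..<n} dd (E0 \<union> fb b) lam cn (\<theta> + 1) CC}"
    unfolding re measure_map_pmf by (simp add: vimage_def)
  also have "\<dots> = 1 - measure_pmf.prob ?P (UNIV - {b. reducible_with {..<n} dd (E0 \<union> fb b) lam cn (\<theta> + 1) CC})"
    using measure_pmf.prob_compl[of "{b. reducible_with {..<n} dd (E0 \<union> fb b) lam cn (\<theta> + 1) CC}" ?P] by simp
  finally have eq2: "measure_pmf.prob (random_edges n q) {Eq. reducible_with {..<n} dd (E0 \<union> Eq) lam cn (\<theta> + 1) CC}
     = 1 - measure_pmf.prob ?P (UNIV - {b. reducible_with {..<n} dd (E0 \<union> fb b) lam cn (\<theta> + 1) CC})" .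
  have "measure_pmf.prob ?P (UNIV - {b. reducible_with {..<n} dd (E0 \<union> fb b) lam cn (\<theta> + 1) CC})
      \<le> measure_pmf.prob ?P (\<Union>(Ev ` ({..<n} \<times> {..<n})))"
    by (rule measure_pmf.finite_measure_mono) (auto simp: red Ev_def)
  also have "\<dots> \<le> (\<Sum>x\<in>{..<n} \<times> {..<n}. measure_pmf.prob ?P (Ev x))"
    by (rule measure_pmf.finite_measure_subadditive_finite) auto
  also have "\<dots> \<le> (\<Sum>x\<in>{..<n} \<times> {..<n}. 1 / real n ^ 3)"
    by (rule sum_mono) (auto simp: Ev_def intro!: pair_prob[OF ell big2 big3])
  also have "\<dots> = 1 / real n" using np by (simp add: power3_eq_cube)
  finally have "measure_pmf.prob ?P (UNIV - {b. reducible_with {..<n} dd (E0 \<union> fb b) lam cn (\<theta> + 1) CC}) \<le> 1 / real n" .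
  thus ?thesis unfolding eq2 by linarith
qed

end

theorem lemma3:
  fixes d :: "nat \<Rightarrow> nat \<Rightarrow> nat \<Rightarrow> real"
    and E0 :: "nat \<Rightarrow> nat set set"
    and conn :: "nat \<Rightarrow> nat \<Rightarrow> nat \<Rightarrow> nat"
    and Q :: "nat \<Rightarrow> nat \<Rightarrow> nat \<Rightarrow> real"
    and \<gamma> A \<alpha> \<phi> lam \<theta> M :: real
  assumes coh: "\<And>n. coherent {..<n} (d n) \<gamma> A \<alpha> \<phi> lam"
    and sub: "\<And>n. substrate {..<n} (d n) (E0 n) (conn n)"
    and theta: "\<theta> > 0"
    and Mpos: "M > 0"
    and Qprob: "\<And>n i j. i < j \<Longrightarrow> j < n \<Longrightarrow> 0 \<le> Q n i j \<and> Q n i j \<le> 1"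
    and rich: "\<And>n. uniformly_rich n (d n) \<gamma> \<alpha> \<theta> M (Q n)"
  shows "\<exists>C>0. (\<lambda>n. measure_pmf.prob (random_edges n (Q n))
            {Eq. reducible_with {..<n} (d n) (E0 n \<union> Eq) lam (conn n) (\<theta> + 1) C})
          \<longlonglongrightarrow> 1"
proof -
  have RGn: "RG n (d n) (E0 n) (conn n) (Q n) \<gamma> A \<alpha> \<phi> lam \<theta> M" for n
    by unfold_locales (use coh sub theta Mpos Qprob rich in auto)
  interpret R0: RG 0 "d 0" "E0 0" "conn 0" "Q 0" \<gamma> A \<alpha> \<phi> lam \<theta> M by (rule RGn)
  have g1: "\<gamma> > 1" and A1: "A > 1" and a0: "\<alpha> > 0" and ph: "\<phi> > 0"
    using R0.g1 R0.A1 R0.alpha0 R0.phi0 .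
  define C where "C = 8 * M / \<phi>"
  define B where "B = A * \<gamma> / ((\<gamma> - 1) * \<alpha>)"
  have Cpos: "C > 0" unfolding C_def using Mpos ph by simp
  have ev1: "eventually (\<lambda>n::nat. n \<ge> 2) at_top" by (rule eventually_ge_at_top)
  have ev2: "eventually (\<lambda>n::nat. ln (real n) powr \<theta> \<le> \<alpha> * real n) at_top"
    using theta a0 by real_asymp
  have ev3: "eventually (\<lambda>n::nat. ln (real n) \<ge> max 1 (B / M + \<phi> / (2 * M))) at_top"
    by real_asymp
  have lower: "eventually (\<lambda>n. 1 - 1 / real n \<le> measure_pmf.prob (random_edges n (Q n))
            {Eq. reducible_with {..<n} (d n) (E0 n \<union> Eq) lam (conn n) (\<theta> + 1) C}) at_top"
    using ev1 ev2 ev3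
  proof eventually_elim
    case (elim n)
    interpret R: RG n "d n" "E0 n" "conn n" "Q n" \<gamma> A \<alpha> \<phi> lam \<theta> M by (rule RGn)
    have ell: "R.ell > 0" using elim(1) by (rule R.ell_pos_of)
    have l1: "R.ell \<ge> 1" using elim(3) unfolding R.ell_def by simp
    have big2: "R.ell powr \<theta> / \<alpha> \<le> real n" using elim(2) a0 unfolding R.ell_def by (simp add: field_simps)
    have P1: "R.ell powr \<theta> \<ge> 1" using l1 theta by (simp add: ge_one_powr_ge_zero)
    have pw: "R.ell powr (\<theta> + 1) = R.ell * R.ell powr \<theta>" using ell by (simp add: powr_add)
    have big3: "3 * R.ell \<le> (R.Lr - R.RR - 1) * \<phi> / (2 * M * R.ell powr \<theta>)"
      unfolding R.Lr_def R.RR_def R.CC_def pw R.B0_def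
      using big3_lemma[OF l1 P1 Mpos ph, of B] elim(3) unfolding B_def R.ell_def
      by (simp add: mult.commute mult.left_commute)
    have "R.CC = C" unfolding R.CC_def C_def ..
    thus ?case using R.prob_bound[OF ell big2 big3] by simp
  qed
  have upper: "eventually (\<lambda>n. measure_pmf.prob (random_edges n (Q n))
            {Eq. reducible_with {..<n} (d n) (E0 n \<union> Eq) lam (conn n) (\<theta> + 1) C} \<le> 1) at_top"
    by simp
  have lim: "(\<lambda>n. 1 - 1 / real n) \<longlonglongrightarrow> 1" by real_asymp
  have lim1: "(\<lambda>n::nat. 1::real) \<longlonglongrightarrow> 1" by simp
  show ?thesis using Cpos tendsto_sandwich[OF lower upper lim lim1] by blast
qed


end
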